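(* Let $m\in\mathbb R$ be the unique minimizing point of $M$, let $s>1$, and suppose there is $x_0>0$ with $\mathbb E[|D^+h(X_1,m+x)|^s]<\infty$ for all $x\in[-x_0,x_0]$. Then for every $x>0$, $$\mathbb P\Big(\sup_{k\ge n}|\hat m_k-m|>x\Big)=o(n^{-s+1}),\qquad n\to\infty.$$
   Context: Let $(S,\mathcal S,Q)$ be a probability space and $h:S\times\mathbb R\to\mathbb R$ such that $h(\cdot,t)$ is $\mathcal S$-measurable for every $t\in\mathbb R$ and $h(x,\cdot)$ is convex for every $x\in S$. For $f:\mathbb R\to\mathbb R$ convex, $D^+f$ and $D^-f$ denote its right and left derivatives; $D^\pm h(x,t)$ denotes the one-sided derivatives of $h(x,\cdot)$ at $t$. Assume $\int_S|D^+h(x,t)|\,Q(dx)<\infty$ and $\int_S|D^-h(x,t)|\,Q(dx)<\infty$ for all $t\in\mathbb R$. Fix $t_0\in\mathbb R$ and set $M(t):=\int_S (h(x,t)-h(x,t_0))\,Q(dx)$; $M$ is real-valued and convex with $D^\pm M(t)=\int_S D^\pm h(x,t)\,Q(dx)$. Let $X_1,X_2,\dots$ be i.i.d. $S$-valued random variables on a probability space $(\Omega,\mathcal A,\mathbb P)$ with common law $Q$, let $M_n(t):=\frac1n\sum_{i=1}^n (h(X_i,t)-h(X_i,t_0))$, and let $\hat m_n$ be the smallest minimizing point of $M_n$ (assumed to exist; it is a random variable). *)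

theory Defs
  imports "HOL-Probability.Probability" "HOL-Library.Landau_Symbols"
begin

definition rderiv :: "(real \<Rightarrow> real) \<Rightarrow> real \<Rightarrow> real" where
  "rderiv f t = Lim (at_right 0) (\<lambda>d. (f (t + d) - f t) / d)"

definition lderiv :: "(real \<Rightarrow> real) \<Rightarrow> real \<Rightarrow> real" where
  "lderiv f t = Lim (at_left 0) (\<lambda>d. (f (t + d) - f t) / d)"

definition popM :: "'s measure \<Rightarrow> ('s \<Rightarrow> real \<Rightarrow> real) \<Rightarrow> real \<Rightarrow> real \<Rightarrow> real" where
  "popM Q h t0 t = (\<integral>x. (h x t - h x t0) \<partial>Q)"

text \<open>Empirical criterion M_n(t) = (1/n) sum_{i<n} (h(X_i,t) - h(X_i,t0)); samples indexed from 0.\<close>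
definition empM :: "(nat \<Rightarrow> 'w \<Rightarrow> 's) \<Rightarrow> ('s \<Rightarrow> real \<Rightarrow> real) \<Rightarrow> real \<Rightarrow> nat \<Rightarrow> 'w \<Rightarrow> real \<Rightarrow> real" where
  "empM X h t0 n \<omega> t = (1 / real n) * (\<Sum>i<n. (h (X i \<omega>) t - h (X i \<omega>) t0))"

end

theory Submission
  imports Defs
begin

lemma rderiv_convex:
  fixes f :: "real \<Rightarrow> real"
  assumes cv: "convex_on UNIV f" and d: "d > 0"
  shows "(f t - f (t - d)) / d \<le> rderiv f t" "rderiv f t \<le> (f (t + d) - f t) / d"
proof -
  define q where "q e = (f (t + e) - f t) / e" for e
  have mono: "q e1 \<le> q e2" if "0 < e1" "e1 < e2" for e1 e2
    using convex_on_slope_le(1)[OF cv, of t "t + e2" "t + e1"] that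
    unfolding q_def by (simp add: field_simps)
  have lb: "(f t - f (t - d)) / d \<le> q e" if "0 < e" for e
    using convex_on_slope_le[OF cv, of "t - d" "t + e" t] that d
    unfolding q_def by (simp add: field_simps)
  define I where "I = Inf (q ` {0<..})"
  have bdd: "bdd_below (q ` {0<..})" using lb by (auto intro!: bdd_belowI2)
  have Ile: "I \<le> q e" if "e > 0" for e
    unfolding I_def using bdd that by (auto intro!: cInf_lower)
  have Ige: "(f t - f (t - d)) / d \<le> I"
    unfolding I_def by (rule cInf_greatest) (auto intro: lb)
  have lim: "(q \<longlongrightarrow> I) (at_right 0)"
  proof (rule order_tendstoI)
    fix a assume "a < I"
    show "eventually (\<lambda>e. a < q e) (at_right 0)"
      using eventually_at_right_real[of 0 1, simplified]
      by (rule eventually_mono) (use Ile \<open>a < I\<close> in force)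
  next
    fix a assume "I < a"
    then obtain e0 where e0: "e0 > 0" "q e0 < a"
      unfolding I_def using cInf_less_iff[of "q ` {0<..}" a] bdd by auto
    show "eventually (\<lambda>e. q e < a) (at_right 0)"
      using eventually_at_right_real[OF e0(1)]
      by (rule eventually_mono) (use mono e0 in fastforce)
  qed
  have "rderiv f t = I"
    unfolding rderiv_def using lim unfolding q_def
    by (intro tendsto_Lim) auto
  then show "(f t - f (t - d)) / d \<le> rderiv f t" "rderiv f t \<le> (f (t + d) - f t) / d"
    using Ige Ile[OF d] by (auto simp: q_def)
qed

lemma exp_quad_bound:
  fixes w c :: real
  assumes "w \<le> c" "0 \<le> c"
  shows "exp w \<le> 1 + w + w\<^sup>2 * exp c / 2"
proof (cases "w \<le> 0")
  case True
  obtain t where t: "\<bar>t\<bar> \<le> \<bar>w\<bar>" "exp w = (\<Sum>m<3. w ^ m / fact m) + exp t / fact 3 * w ^ 3"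
    using Maclaurin_exp_le[of w 3] by blast
  have "w ^ 3 \<le> 0" using True by (simp add: power_le_zero_eq)
  hence "exp t / fact 3 * w ^ 3 \<le> 0" by (intro mult_nonneg_nonpos) auto
  moreover have "(\<Sum>m<3. w ^ m / fact m) = 1 + w + w\<^sup>2 / 2"
    by (simp add: numeral_3_eq_3 power2_eq_square)
  moreover have "w\<^sup>2 / 2 \<le> w\<^sup>2 * exp c / 2"
    using assms by (simp add: mult_le_cancel_left1)
  ultimately show ?thesis using t by linarith
next
  case False
  obtain t where t: "\<bar>t\<bar> \<le> \<bar>w\<bar>" "exp w = (\<Sum>m<2. w ^ m / fact m) + exp t / fact 2 * w ^ 2"
    using Maclaurin_exp_le[of w 2] by blast
  have "exp t \<le> exp c" using t(1) False assms by auto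
  hence "exp t * w ^ 2 \<le> exp c * w ^ 2" by (intro mult_right_mono) auto
  hence "exp t / fact 2 * w ^ 2 \<le> w\<^sup>2 * exp c / 2"
    by (simp add: mult.commute)
  moreover have "(\<Sum>m<2. w ^ m / fact m) = 1 + w"
    by (simp add: numeral_2_eq_2)
  ultimately show ?thesis using t by linarith
qed

lemma powr_tele_step:
  fixes p j :: real
  assumes "p > 1" "j > 0"
  shows "(j + 1) powr (-p) \<le> (j powr (1 - p) - (j + 1) powr (1 - p)) / (p - 1)"
proof -
  have der: "\<And>x. j \<le> x \<Longrightarrow> x \<le> j + 1 \<Longrightarrow> ((\<lambda>x. x powr (1 - p)) has_real_derivative (1 - p) * x powr (1 - p - 1)) (at x)"
    using assms by (intro has_real_derivative_powr) auto
  obtain z where z: "j < z" "z < j + 1"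
    "(j + 1) powr (1 - p) - j powr (1 - p) = (j + 1 - j) * ((1 - p) * z powr (1 - p - 1))"
    using MVT2[of j "j + 1" "\<lambda>x. x powr (1 - p)" "\<lambda>x. (1 - p) * x powr (1 - p - 1)", OF _ der] by auto
  have "(j + 1) powr (-p) \<le> z powr (-p)"
    using z assms by (intro powr_mono2') auto
  moreover have "j powr (1 - p) - (j + 1) powr (1 - p) = (p - 1) * z powr (-p)"
    using z(3) by (simp add: algebra_simps)
  ultimately have "(p - 1) * (j + 1) powr (-p) \<le> j powr (1 - p) - (j + 1) powr (1 - p)"
    using assms by (simp add: mult_left_mono)
  then show ?thesis using assms by (simp add: pos_le_divide_eq mult.commute)
qed

lemma tail_sum_powr:
  fixes p :: real and n :: nat
  assumes "p > 1" "n \<ge> 1"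
  shows "summable (\<lambda>i. real (i + n + 1) powr (-p))"
    "(\<Sum>i. real (i + n + 1) powr (-p)) \<le> real n powr (1 - p) / (p - 1)"
proof -
  define a where "a i = real (i + n) powr (1 - p) / (p - 1)" for i
  have "(\<lambda>i. real (i + n) powr (1 - p)) \<longlonglongrightarrow> 0"
    using assms by (intro tendsto_neg_powr filterlim_compose[OF filterlim_real_sequentially filterlim_add_const_nat_at_top]) auto
  hence "a \<longlonglongrightarrow> 0 / (p - 1)" unfolding a_def using assms by (intro tendsto_divide) auto
  hence sums: "(\<lambda>i. a i - a (Suc i)) sums (a 0 - 0)"
    using telescope_sums' by force
  have le: "real (i + n + 1) powr (-p) \<le> a i - a (Suc i)" for i
  proof -
    have e1: "real (i + n + 1) = real (i + n) + 1" by simp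
    have e2: "real (Suc i + n) = real (i + n) + 1" by simp
    have "a i - a (Suc i) = (real (i + n) powr (1 - p) - (real (i + n) + 1) powr (1 - p)) / (p - 1)"
      unfolding a_def e2 by (simp only: diff_divide_distrib)
    moreover have "(real (i + n) + 1) powr (-p) \<le> (real (i + n) powr (1 - p) - (real (i + n) + 1) powr (1 - p)) / (p - 1)"
      using assms by (intro powr_tele_step) auto
    ultimately show ?thesis unfolding e1 by simp
  qed
  have nn: "0 \<le> real (i + n + 1) powr (-p)" for i by simp
  have sg: "summable (\<lambda>i. a i - a (Suc i))" using sums by (rule sums_summable)
  show sm: "summable (\<lambda>i. real (i + n + 1) powr (-p))"
  proof (rule summable_comparison_test'[OF sg])
    fix i :: nat show "norm (real (i + n + 1) powr (-p)) \<le> a i - a (Suc i)"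
      using le[of i] nn[of i] by (simp only: real_norm_def abs_of_nonneg)
  qed
  have "(\<Sum>i. real (i + n + 1) powr (-p)) \<le> (\<Sum>i. a i - a (Suc i))"
    by (rule suminf_le[OF le sm sg])
  also have "\<dots> = a 0" using sums by (simp add: sums_iff)
  finally show "(\<Sum>i. real (i + n + 1) powr (-p)) \<le> real n powr (1 - p) / (p - 1)"
    by (simp add: a_def)
qed

context
  fixes P :: "'w measure" and Q :: "'s measure" and X :: "nat \<Rightarrow> 'w \<Rightarrow> 's"
  assumes probP: "prob_space P" and meas_X: "\<And>i. X i \<in> measurable P Q"
    and law_X: "\<And>i. distr P Q (X i) = Q"
    and indep_X: "prob_space.indep_vars P (\<lambda>_. Q) X UNIV"
begin

lemma probQ: "prob_space Q"
  using prob_space.prob_space_distr[OF probP meas_X[of 0]] law_X[of 0] by simp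

lemma int_transfer:
  fixes f :: "'s \<Rightarrow> real"
  assumes "f \<in> borel_measurable Q"
  shows "(\<integral>\<omega>. f (X i \<omega>) \<partial>P) = (\<integral>y. f y \<partial>Q)"
  using integral_distr[OF meas_X[of i] assms] law_X[of i] by simp

lemma measure_transfer:
  assumes "A \<in> sets Q"
  shows "measure P {\<omega> \<in> space P. X i \<omega> \<in> A} = measure Q A"
proof -
  have "measure P {\<omega> \<in> space P. X i \<omega> \<in> A} = measure P (X i -` A \<inter> space P)" by (rule arg_cong[where f="measure P"]) auto
  also have "\<dots> = measure (distr P Q (X i)) A" using measure_distr[OF meas_X assms] by simp
  finally show ?thesis using law_X by simp
qed

lemma indep_prod:
  fixes \<phi> :: "nat \<Rightarrow> 's \<Rightarrow> real"
  assumes meas: "\<And>i. \<phi> i \<in> borel_measurable Q" and bd: "\<And>i y. \<bar>\<phi> i y\<bar> \<le> B i"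
  shows "(\<integral>\<omega>. (\<Prod>i<k. \<phi> i (X i \<omega>)) \<partial>P) = (\<Prod>i<k. \<integral>y. \<phi> i y \<partial>Q)"
proof -
  interpret P: prob_space P by (rule probP)
  have ind: "P.indep_vars (\<lambda>_. borel) (\<lambda>i \<omega>. \<phi> i (X i \<omega>)) {..<k}"
    by (rule P.indep_vars_compose2[OF P.indep_vars_subset[OF indep_X]]) (auto intro: meas)
  have int: "integrable P (\<lambda>\<omega>. \<phi> i (X i \<omega>))" for i
    by (rule P.integrable_const_bound[where B="B i"]) (use bd meas meas_X in auto)
  have "(\<integral>\<omega>. (\<Prod>i<k. \<phi> i (X i \<omega>)) \<partial>P) = (\<Prod>i<k. \<integral>\<omega>. \<phi> i (X i \<omega>) \<partial>P)"
    by (rule P.indep_vars_lebesgue_integral[OF _ ind int]) auto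
  also have "\<dots> = (\<Prod>i<k. \<integral>y. \<phi> i y \<partial>Q)"
    by (intro prod.cong refl int_transfer meas)
  finally show ?thesis .
qed

lemma chernoff:
  fixes z :: "nat \<Rightarrow> 's \<Rightarrow> real" and lam :: real
  assumes meas: "\<And>i. z i \<in> borel_measurable Q" and lb: "\<And>i y. z i y \<ge> - L i" and lam: "lam \<ge> 0"
  shows "measure P {\<omega> \<in> space P. (\<Sum>i<k. z i (X i \<omega>)) \<le> 0}
          \<le> (\<Prod>i<k. \<integral>y. exp (- lam * z i y) \<partial>Q)"
proof -
  interpret P: prob_space P by (rule probP)
  have bd: "\<bar>exp (- lam * z i y)\<bar> \<le> exp (lam * L i)" for i y
  proof -
    have "lam * (- L i) \<le> lam * z i y" using lb[of i y] lam by (rule mult_left_mono)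
    thus ?thesis by simp
  qed
  have m: "(\<lambda>y. exp (- lam * z i y)) \<in> borel_measurable Q" for i using meas by measurable
  have mP: "(\<lambda>\<omega>. \<Prod>i<k. exp (- lam * z i (X i \<omega>))) \<in> borel_measurable P"
    using meas meas_X by measurable
  have "measure P {\<omega> \<in> space P. (\<Sum>i<k. z i (X i \<omega>)) \<le> 0}
      \<le> measure P {\<omega> \<in> space P. 1 \<le> (\<Prod>i<k. exp (- lam * z i (X i \<omega>)))}"
  proof (rule P.finite_measure_mono)
    show "{\<omega> \<in> space P. 1 \<le> (\<Prod>i<k. exp (- lam * z i (X i \<omega>)))} \<in> sets P" using mP by measurable
    show "{\<omega> \<in> space P. (\<Sum>i<k. z i (X i \<omega>)) \<le> 0} \<subseteq> {\<omega> \<in> space P. 1 \<le> (\<Prod>i<k. exp (- lam * z i (X i \<omega>)))}"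
    proof safe
      fix \<omega> assume "\<omega> \<in> space P" "(\<Sum>i<k. z i (X i \<omega>)) \<le> 0"
      hence "0 \<le> - lam * (\<Sum>i<k. z i (X i \<omega>))" using lam by (simp add: mult_nonneg_nonpos)
      hence "1 \<le> exp (\<Sum>i<k. - lam * z i (X i \<omega>))" by (simp add: sum_distrib_left)
      thus "1 \<le> (\<Prod>i<k. exp (- lam * z i (X i \<omega>)))" by (simp add: exp_sum)
    qed
  qed
  also have "\<dots> \<le> (\<integral>\<omega>. (\<Prod>i<k. exp (- lam * z i (X i \<omega>))) \<partial>P) / 1"
  proof (rule integral_Markov_inequality_measure[where A="space P"])
    show "integrable P (\<lambda>\<omega>. \<Prod>i<k. exp (- lam * z i (X i \<omega>)))"
      by (rule P.integrable_const_bound[where B="\<Prod>i<k. exp (lam * L i)"])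
         (use mP bd in \<open>auto simp: abs_prod intro!: AE_I2 prod_mono\<close>)
  qed (auto simp: prod_nonneg)
  also have "\<dots> = (\<Prod>i<k. \<integral>y. exp (- lam * z i y) \<partial>Q)"
    using indep_prod[of "\<lambda>i y. exp (- lam * z i y)", OF m bd] by simp
  finally show ?thesis .
qed

end

lemma sq_le_powr:
  fixes c y B \<sigma> :: real
  assumes "\<bar>c\<bar> \<le> \<bar>y\<bar>" "\<bar>c\<bar> \<le> B" "0 \<le> \<sigma>" "\<sigma> \<le> 2"
  shows "c\<^sup>2 \<le> B powr (2 - \<sigma>) * \<bar>y\<bar> powr \<sigma>"
proof (cases "c = 0")
  case True thus ?thesis by simp
next
  case False
  have "c\<^sup>2 = \<bar>c\<bar> powr 2" by (simp add: False powr_numeral)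
  also have "\<dots> = \<bar>c\<bar> powr \<sigma> * \<bar>c\<bar> powr (2 - \<sigma>)" by (simp add: powr_add[symmetric])
  also have "\<dots> \<le> \<bar>y\<bar> powr \<sigma> * B powr (2 - \<sigma>)"
    using assms by (intro mult_mono powr_mono2) auto
  finally show ?thesis by (simp add: mult.commute)
qed

context
  fixes P :: "'w measure" and Q :: "'s measure" and X :: "nat \<Rightarrow> 'w \<Rightarrow> 's"
  assumes probP: "prob_space P" and meas_X: "\<And>i. X i \<in> measurable P Q"
    and law_X: "\<And>i. distr P Q (X i) = Q"
    and indep_X: "prob_space.indep_vars P (\<lambda>_. Q) X UNIV"
begin

lemma chernoff_step:
  fixes g :: "'s \<Rightarrow> real" and z :: "nat \<Rightarrow> 's \<Rightarrow> real" and k :: nat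
    and U \<delta> \<sigma> a \<beta> :: real and L :: "nat \<Rightarrow> real"
  assumes g_meas: "g \<in> borel_measurable Q" and g_int: "integrable Q g"
    and U: "0 \<le> U" "0 < \<delta>" "\<delta> \<le> (\<integral>y. min (g y) U \<partial>Q)"
    and sig: "1 < \<sigma>" "\<sigma> \<le> 2" "integrable Q (\<lambda>y. \<bar>g y\<bar> powr \<sigma>)"
    and a: "0 < a" and beta: "0 < \<beta>" and k: "1 \<le> k"
    and cond: "(a * ln k / (\<beta> * k)) * k powr a * (\<beta> * k + U) powr (2 - \<sigma>) * (\<integral>y. \<bar>g y\<bar> powr \<sigma> \<partial>Q) \<le> \<delta>"
    and zm: "\<And>i. z i \<in> borel_measurable Q"
    and zlb: "\<And>i y. z i y \<ge> - L i"
    and z1: "\<And>i y. i < k \<Longrightarrow> min (g y) U \<le> z i y"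
    and z2: "\<And>i y. i < k \<Longrightarrow> - (\<beta> * k) \<le> z i y"
    and z3: "\<And>i y. i < k \<Longrightarrow> \<bar>z i y\<bar> \<le> \<bar>g y\<bar>"
    and z4: "\<And>i y. i < k \<Longrightarrow> \<bar>z i y\<bar> \<le> \<beta> * k + U"
  shows "measure P {\<omega> \<in> space P. (\<Sum>i<k. z i (X i \<omega>)) \<le> 0} \<le> exp (- (a * ln k / \<beta>) * \<delta> / 2)"
proof -
  interpret Qp: prob_space Q by (rule probQ[OF probP meas_X law_X indep_X])
  define lam where "lam = a * ln k / (\<beta> * k)"
  define B where "B = \<beta> * k + U"
  define C where "C = (\<integral>y. \<bar>g y\<bar> powr \<sigma> \<partial>Q)"
  have kpos: "real k > 0" using k by simp
  have lam0: "lam \<ge> 0" unfolding lam_def using a beta k by simp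
  have lamb: "lam * (\<beta> * k) = a * ln k" unfolding lam_def using beta kpos by simp
  have each: "(\<integral>y. exp (- lam * z i y) \<partial>Q) \<le> exp (- lam * \<delta> / 2)" if i: "i < k" for i
  proof -
    have zi_int: "integrable Q (z i)"
      by (rule Bochner_Integration.integrable_bound[OF g_int zm]) (use z3[OF i] in auto)
    have zmin_int: "integrable Q (\<lambda>y. min (g y) U)"
    proof -
      have "integrable Q (\<lambda>y. \<bar>g y\<bar> + U)"
        using g_int by (intro Bochner_Integration.integrable_add) auto
      thus ?thesis by (rule Bochner_Integration.integrable_bound) (use g_meas U in auto)
    qed
    have w: "- lam * z i y \<le> a * ln k" for y
    proof -
      have "lam * (- (\<beta> * k)) \<le> lam * z i y" using z2[OF i] lam0 by (rule mult_left_mono)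
      thus ?thesis using lamb by simp
    qed
    have pt: "exp (- lam * z i y) \<le> 1 - lam * z i y + lam\<^sup>2 * k powr a * (B powr (2 - \<sigma>) * \<bar>g y\<bar> powr \<sigma>) / 2" for y
    proof -
      have c0: "0 \<le> a * ln k" using a k by simp
      have "exp (- lam * z i y) \<le> 1 + (- lam * z i y) + (- lam * z i y)\<^sup>2 * exp (a * ln k) / 2"
        by (rule exp_quad_bound[OF w[of y] c0])
      also have "exp (a * ln k) = k powr a" using kpos by (simp add: powr_def)
      also have "(- lam * z i y)\<^sup>2 = lam\<^sup>2 * (z i y)\<^sup>2" by (simp add: power_mult_distrib)
      also have "(z i y)\<^sup>2 \<le> B powr (2 - \<sigma>) * \<bar>g y\<bar> powr \<sigma>"
        using z3[OF i] z4[OF i] sig unfolding B_def by (intro sq_le_powr) auto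
      hence "lam\<^sup>2 * (z i y)\<^sup>2 * k powr a / 2 \<le> lam\<^sup>2 * (B powr (2 - \<sigma>) * \<bar>g y\<bar> powr \<sigma>) * k powr a / 2"
        by (intro divide_right_mono mult_right_mono mult_left_mono) auto
      finally show ?thesis by (simp add: algebra_simps)
    qed
    have int1: "integrable Q (\<lambda>y. exp (- lam * z i y))"
      by (rule Qp.integrable_const_bound[where B="exp (a * ln k)"])
         (use zm w in \<open>auto intro!: AE_I2\<close>)
    have "(\<integral>y. exp (- lam * z i y) \<partial>Q) \<le> (\<integral>y. 1 - lam * z i y + lam\<^sup>2 * k powr a * (B powr (2 - \<sigma>) * \<bar>g y\<bar> powr \<sigma>) / 2 \<partial>Q)"
      by (intro integral_mono int1 pt) (use zi_int sig(3) in auto)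
    also have "\<dots> = 1 - lam * (\<integral>y. z i y \<partial>Q) + lam\<^sup>2 * k powr a * B powr (2 - \<sigma>) * C / 2"
      using zi_int sig(3) by (simp add: C_def Qp.prob_space)
    also have "\<dots> \<le> 1 - lam * \<delta> + lam * \<delta> / 2"
    proof -
      have "\<delta> \<le> (\<integral>y. z i y \<partial>Q)"
        using U(3) integral_mono[OF zmin_int zi_int z1[OF i]] by linarith
      hence A: "lam * \<delta> \<le> lam * (\<integral>y. z i y \<partial>Q)" using lam0 by (rule mult_left_mono)
      have "lam * k powr a * B powr (2 - \<sigma>) * C \<le> \<delta>" using cond unfolding lam_def B_def C_def by simp
      hence "lam * (lam * k powr a * B powr (2 - \<sigma>) * C) \<le> lam * \<delta>" using lam0 by (rule mult_left_mono)
      hence "lam\<^sup>2 * k powr a * B powr (2 - \<sigma>) * C / 2 \<le> lam * \<delta> / 2" by (simp add: power2_eq_square algebra_simps)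
      thus ?thesis using A by linarith
    qed
    also have "\<dots> = 1 + (- lam * \<delta> / 2)" by simp
    also have "\<dots> \<le> exp (- lam * \<delta> / 2)" by (rule exp_ge_add_one_self)
    finally show ?thesis .
  qed
  have "measure P {\<omega> \<in> space P. (\<Sum>i<k. z i (X i \<omega>)) \<le> 0} \<le> (\<Prod>i<k. \<integral>y. exp (- lam * z i y) \<partial>Q)"
    by (rule chernoff[OF probP meas_X law_X indep_X zm zlb lam0])
  also have "\<dots> \<le> (\<Prod>i<k. exp (- lam * \<delta> / 2))"
    by (intro prod_mono conjI each) auto
  also have "\<dots> = exp (real k * (- lam * \<delta> / 2))" by (simp only: prod_constant exp_of_nat_mult card_lessThan)
  also have "real k * (- lam * \<delta> / 2) = - (a * ln k / \<beta>) * \<delta> / 2"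
    unfolding lam_def using kpos by simp
  finally show ?thesis .
qed

end

lemma clamp_facts:
  fixes y b U :: real
  assumes "0 \<le> b" "0 \<le> U"
  shows "- b \<le> min (max y (-b)) U" "min y U \<le> min (max y (-b)) U"
    "\<bar>min (max y (-b)) U\<bar> \<le> \<bar>y\<bar>" "\<bar>min (max y (-b)) U\<bar> \<le> b + U"
  using assms by auto

context
  fixes P :: "'w measure" and Q :: "'s measure" and X :: "nat \<Rightarrow> 'w \<Rightarrow> 's"
  assumes probP: "prob_space P" and meas_X: "\<And>i. X i \<in> measurable P Q"
    and law_X: "\<And>i. distr P Q (X i) = Q"
    and indep_X: "prob_space.indep_vars P (\<lambda>_. Q) X UNIV"
begin

lemma main_prob:
  fixes g :: "'s \<Rightarrow> real" and s :: real
  assumes g_meas[measurable]: "g \<in> borel_measurable Q" and g_int: "integrable Q g"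
    and mu: "0 < (\<integral>y. g y \<partial>Q)" and mom: "integrable Q (\<lambda>y. \<bar>g y\<bar> powr s)" and s: "1 < s"
  shows "(\<lambda>n. measure P {\<omega> \<in> space P. \<exists>k\<ge>n. (\<Sum>i<k. g (X i \<omega>)) \<le> 0}) \<in> o(\<lambda>n. real n powr (1 - s))"
proof -
  interpret Qp: prob_space Q by (rule probQ[OF probP meas_X law_X indep_X])
  interpret P: prob_space P by (rule probP)
  note meas_X[measurable]
  define \<delta> where "\<delta> = (\<integral>y. g y \<partial>Q) / 2"
  have \<delta>: "0 < \<delta>" using mu by (simp add: \<delta>_def)
  have "(\<lambda>N. \<integral>y. min (g y) (real N) \<partial>Q) \<longlonglongrightarrow> (\<integral>y. g y \<partial>Q)"
  proof (rule integral_dominated_convergence[where w="\<lambda>y. \<bar>g y\<bar>"])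
    show "AE y in Q. (\<lambda>N. min (g y) (real N)) \<longlonglongrightarrow> g y"
    proof (rule AE_I2, rule tendsto_eventually)
      fix y obtain N :: nat where "g y \<le> real N" using real_arch_simple by blast
      thus "eventually (\<lambda>M. min (g y) (real M) = g y) sequentially"
        unfolding eventually_sequentially by (intro exI[of _ N]) auto
    qed
    show "AE y in Q. norm (min (g y) (real N)) \<le> \<bar>g y\<bar>" for N by (intro AE_I2) auto
  qed (use g_int in auto)
  hence "eventually (\<lambda>N. \<delta> < (\<integral>y. min (g y) (real N) \<partial>Q)) sequentially"
    by (rule order_tendstoD) (use \<delta> in \<open>simp add: \<delta>_def\<close>)
  then obtain N0 :: nat where "\<delta> < (\<integral>y. min (g y) (real N0) \<partial>Q)"
    using eventually_sequentially by auto
  define U where "U = real N0"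
  have U: "0 \<le> U" "\<delta> \<le> (\<integral>y. min (g y) U \<partial>Q)" using \<open>\<delta> < _\<close> by (auto simp: U_def)
  define \<sigma> where "\<sigma> = min s 2"
  have sig: "1 < \<sigma>" "\<sigma> \<le> 2" "\<sigma> \<le> s" using s by (auto simp: \<sigma>_def)
  have sig_int: "integrable Q (\<lambda>y. \<bar>g y\<bar> powr \<sigma>)"
  proof -
    have i1: "integrable Q (\<lambda>y. 1 + \<bar>g y\<bar> powr s)" using mom by (intro Bochner_Integration.integrable_add) auto
    have le1: "\<bar>g y\<bar> powr \<sigma> \<le> 1 + \<bar>g y\<bar> powr s" for y
    proof (cases "\<bar>g y\<bar> \<le> 1")
      case True
      hence "\<bar>g y\<bar> powr \<sigma> \<le> 1 powr \<sigma>" using sig by (intro powr_mono2) auto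
      hence "\<bar>g y\<bar> powr \<sigma> \<le> 1" by simp
      moreover have "0 \<le> \<bar>g y\<bar> powr s" by simp
      ultimately show ?thesis by linarith
    next
      case False
      hence "\<bar>g y\<bar> powr \<sigma> \<le> \<bar>g y\<bar> powr s" using sig by (intro powr_mono) auto
      thus ?thesis by simp
    qed
    show ?thesis
      by (rule Bochner_Integration.integrable_bound[OF i1]) (use le1 in \<open>auto intro!: AE_I2 order.trans[OF le1]\<close>)
  qed
  define C where "C = (\<integral>y. \<bar>g y\<bar> powr \<sigma> \<partial>Q)"
  define a where "a = (\<sigma> - 1) / 2"
  have a: "0 < a" using sig by (simp add: a_def)
  define p where "p = s + 1"
  have p: "1 < p" "p - 1 = s" using s by (auto simp: p_def)
  define \<beta> where "\<beta> = a * \<delta> / (2 * p)"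
  have \<beta>: "0 < \<beta>" using a \<delta> p by (simp add: \<beta>_def)
  define \<epsilon> where "\<epsilon> = \<beta> / 2"
  have \<epsilon>: "0 < \<epsilon>" using \<beta> by (simp add: \<epsilon>_def)
  define D where "D = a * C * (\<beta> + U) powr (2 - \<sigma>) / \<beta>"
  have "(\<lambda>k. D * (ln (real k) / real k powr a)) \<longlonglongrightarrow> D * 0"
    by (intro tendsto_mult tendsto_const lim_ln_over_power a)
  hence "eventually (\<lambda>k. D * (ln (real k) / real k powr a) < \<delta>) sequentially"
    using \<delta> by (intro order_tendstoD) auto
  then obtain K0 where K0: "\<And>k. k \<ge> K0 \<Longrightarrow> D * (ln (real k) / real k powr a) < \<delta>"
    using eventually_sequentially by auto
  have cond: "(a * ln k / (\<beta> * k)) * k powr a * (\<beta> * k + U) powr (2 - \<sigma>) * C \<le> \<delta>"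
    if k: "k \<ge> K0" "k \<ge> 1" for k :: nat
  proof -
    have kp: "real k > 0" using k by simp
    have C0: "0 \<le> C" unfolding C_def by (intro integral_nonneg_AE AE_I2) auto
    have l0: "0 \<le> ln (real k)" using k by simp
    have "(\<beta> * k + U) powr (2 - \<sigma>) \<le> ((\<beta> + U) * k) powr (2 - \<sigma>)"
      using k U \<beta> sig mult_left_mono[of 1 "real k" U] mult_left_mono[of 1 "real k" \<beta>] by (intro powr_mono2) (auto simp: algebra_simps)
    also have "\<dots> = (\<beta> + U) powr (2 - \<sigma>) * k powr (2 - \<sigma>)"
      using U \<beta> by (simp add: powr_mult)
    finally have B: "(\<beta> * k + U) powr (2 - \<sigma>) \<le> (\<beta> + U) powr (2 - \<sigma>) * k powr (2 - \<sigma>)" .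
    have le1: "(a * ln k / (\<beta> * k)) * k powr a * (\<beta> * k + U) powr (2 - \<sigma>) * C
        \<le> (a * ln k / (\<beta> * k)) * k powr a * ((\<beta> + U) powr (2 - \<sigma>) * k powr (2 - \<sigma>)) * C"
      using B a \<beta> l0 C0 kp by (intro mult_right_mono mult_left_mono) auto
    have eqk: "k powr a * k powr (2 - \<sigma>) = k / k powr a"
    proof -
      have ex: "a + (2 - \<sigma>) = 1 - a" by (simp add: a_def field_simps)
      have "k powr a * k powr (2 - \<sigma>) = k powr (a + (2 - \<sigma>))" using kp by (simp add: powr_add)
      also have "\<dots> = k powr (1 - a)" by (simp only: ex)
      also have "\<dots> = k / k powr a" using kp by (simp add: powr_diff)
      finally show ?thesis .
    qed
    have "(a * ln k / (\<beta> * k)) * k powr a * ((\<beta> + U) powr (2 - \<sigma>) * k powr (2 - \<sigma>)) * C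
        = (a * ln k / (\<beta> * k)) * (k powr a * k powr (2 - \<sigma>)) * (\<beta> + U) powr (2 - \<sigma>) * C"
      by (simp only: mult_ac)
    also have "\<dots> = D * (ln (real k) / real k powr a)"
      unfolding eqk D_def using kp \<beta> by (simp add: field_simps)
    finally show ?thesis using K0[OF k(1)] le1 by simp
  qed
  define clamp where "clamp n i y = min (max y (- (\<epsilon> * real (i + n + 1)))) U" for n i :: nat and y :: real
  define T where "T n = (\<Union>i. {\<omega> \<in> space P. g (X i \<omega>) < - (\<epsilon> * real (i + n + 1))})" for n
  define E where "E n k = {\<omega> \<in> space P. (\<Sum>i<k. clamp n i (g (X i \<omega>))) \<le> 0}" for n k
  define A where "A n = {\<omega> \<in> space P. \<exists>k\<ge>n. (\<Sum>i<k. g (X i \<omega>)) \<le> 0}" for n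
  define W where "W n y = \<bar>g y\<bar> powr s * (if \<epsilon> * real n < \<bar>g y\<bar> then 1 else 0)" for n :: nat and y
  define R where "R n = (\<integral>y. W n y \<partial>Q)" for n
  have Wm[measurable]: "W n \<in> borel_measurable Q" for n unfolding W_def by measurable
  have W0: "0 \<le> W n y" for n y unfolding W_def by auto
  have Wle: "\<bar>W n y\<bar> \<le> \<bar>g y\<bar> powr s" for n y unfolding W_def by auto
  have Wint: "integrable Q (W n)" for n
    by (rule Bochner_Integration.integrable_bound[OF mom]) (use Wle in auto)
  have R0: "R \<longlonglongrightarrow> 0"
  proof -
    have "(\<lambda>n. \<integral>y. W n y \<partial>Q) \<longlonglongrightarrow> (\<integral>y. 0 \<partial>Q)"
    proof (rule integral_dominated_convergence[where w="\<lambda>y. \<bar>g y\<bar> powr s"])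
      show "AE y in Q. (\<lambda>n. W n y) \<longlonglongrightarrow> 0"
      proof (rule AE_I2, rule tendsto_eventually)
        fix y obtain N :: nat where "\<bar>g y\<bar> / \<epsilon> \<le> real N" using real_arch_simple by blast
        hence "\<bar>g y\<bar> \<le> \<epsilon> * real N" using \<epsilon> by (simp add: field_simps)
        hence "\<And>n. n \<ge> N \<Longrightarrow> \<bar>g y\<bar> \<le> \<epsilon> * real n"
          using \<epsilon> by (smt (verit) mult_left_mono of_nat_mono)
        thus "eventually (\<lambda>n. W n y = 0) sequentially"
          unfolding eventually_sequentially W_def by (intro exI[of _ N]) (auto dest: leD)
      qed
      show "AE y in Q. norm (W n y) \<le> \<bar>g y\<bar> powr s" for n using Wle by auto
    qed (use mom in auto)
    moreover have "R = (\<lambda>n. \<integral>y. W n y \<partial>Q)" by (rule ext) (simp add: R_def)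
    ultimately show ?thesis by simp
  qed
  have incl: "A n \<subseteq> T n \<union> (\<Union>j. E n (j + n))" for n
  proof
    fix \<omega> assume \<omega>: "\<omega> \<in> A n"
    show "\<omega> \<in> T n \<union> (\<Union>j. E n (j + n))"
    proof (cases "\<omega> \<in> T n")
      case False
      from \<omega> obtain k where k: "k \<ge> n" "(\<Sum>i<k. g (X i \<omega>)) \<le> 0" "\<omega> \<in> space P" unfolding A_def by auto
      have "\<And>i. \<not> g (X i \<omega>) < - (\<epsilon> * real (i + n + 1))" using False k(3) unfolding T_def by auto
      hence "clamp n i (g (X i \<omega>)) \<le> g (X i \<omega>)" for i unfolding clamp_def
        by (metis max.absorb1 min.cobounded1 not_le order.strict_implies_order)
      hence "(\<Sum>i<k. clamp n i (g (X i \<omega>))) \<le> (\<Sum>i<k. g (X i \<omega>))" by (intro sum_mono) auto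
      hence "\<omega> \<in> E n ((k - n) + n)" using k by (simp add: E_def)
      thus ?thesis by blast
    qed auto
  qed
  have Tsets: "{\<omega> \<in> space P. g (X i \<omega>) < - (\<epsilon> * real (i + n + 1))} \<in> sets P" for i n by measurable
  have Esets: "E n k \<in> sets P" for n k unfolding E_def clamp_def by measurable
  have Tterm: "measure P {\<omega> \<in> space P. g (X i \<omega>) < - (\<epsilon> * real (i + n + 1))}
       \<le> R n / \<epsilon> powr s * real (i + n + 1) powr (-s)" for i n
  proof -
    define j where "j = real (i + n + 1)"
    have j: "0 < j" "real n < j" by (auto simp: j_def)
    have "{\<omega> \<in> space P. g (X i \<omega>) < - (\<epsilon> * j)} = {\<omega> \<in> space P. X i \<omega> \<in> {y \<in> space Q. g y < - (\<epsilon> * j)}}"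
      using measurable_space[OF meas_X[of i]] by auto
    hence "measure P {\<omega> \<in> space P. g (X i \<omega>) < - (\<epsilon> * j)} = measure Q {y \<in> space Q. g y < - (\<epsilon> * j)}"
      using measure_transfer[OF probP meas_X law_X indep_X, of "{y \<in> space Q. g y < - (\<epsilon> * j)}" i] by simp
    also have "\<dots> \<le> measure Q {y \<in> space Q. (\<epsilon> * j) powr s \<le> W n y}"
    proof (rule Qp.finite_measure_mono)
      show "{y \<in> space Q. (\<epsilon> * j) powr s \<le> W n y} \<in> sets Q" by measurable
      show "{y \<in> space Q. g y < - (\<epsilon> * j)} \<subseteq> {y \<in> space Q. (\<epsilon> * j) powr s \<le> W n y}"
      proof safe
        fix y assume y: "g y < - (\<epsilon> * j)"
        hence gy: "\<epsilon> * j < \<bar>g y\<bar>" by auto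
        moreover have "\<epsilon> * real n < \<epsilon> * j" using j \<epsilon> by simp
        ultimately have "W n y = \<bar>g y\<bar> powr s" unfolding W_def by auto
        moreover have "(\<epsilon> * j) powr s \<le> \<bar>g y\<bar> powr s" using gy \<epsilon> j s by (intro powr_mono2) auto
        ultimately show "(\<epsilon> * j) powr s \<le> W n y" by simp
      qed
    qed
    also have "\<dots> \<le> R n / (\<epsilon> * j) powr s"
      unfolding R_def using Wint W0 \<epsilon> j by (intro integral_Markov_inequality_measure[where A="space Q"]) auto
    also have "R n / (\<epsilon> * j) powr s = R n / \<epsilon> powr s * j powr (-s)"
      using \<epsilon> j by (simp add: powr_mult powr_minus field_simps)
    finally show ?thesis unfolding j_def .
  qed
  have Tbound: "measure P (T n) \<le> R n / \<epsilon> powr s * (real n powr (1 - s) / (s - 1))" if n: "n \<ge> 1" for n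
  proof -
    have R0': "0 \<le> R n / \<epsilon> powr s" unfolding R_def using W0 by (auto intro!: integral_nonneg_AE divide_nonneg_nonneg)
    have sm: "summable (\<lambda>i. R n / \<epsilon> powr s * real (i + n + 1) powr (-s))"
      using tail_sum_powr(1)[OF s n] by (rule summable_mult)
    have sm2: "summable (\<lambda>i. measure P {\<omega> \<in> space P. g (X i \<omega>) < - (\<epsilon> * real (i + n + 1))})"
      by (rule summable_comparison_test'[OF sm]) (use Tterm in auto)
    have "measure P (T n) \<le> (\<Sum>i. measure P {\<omega> \<in> space P. g (X i \<omega>) < - (\<epsilon> * real (i + n + 1))})"
      unfolding T_def using Tsets sm2 by (intro P.finite_measure_subadditive_countably) auto
    also have "\<dots> \<le> (\<Sum>i. R n / \<epsilon> powr s * real (i + n + 1) powr (-s))"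
      by (rule suminf_le[OF Tterm sm2 sm])
    also have "\<dots> = R n / \<epsilon> powr s * (\<Sum>i. real (i + n + 1) powr (-s))"
      using tail_sum_powr(1)[OF s n] by (rule suminf_mult)
    also have "\<dots> \<le> R n / \<epsilon> powr s * (real n powr (1 - s) / (s - 1))"
      using tail_sum_powr(2)[OF s n] R0' by (rule mult_left_mono)
    finally show ?thesis .
  qed
  have en: "0 \<le> \<epsilon> * real (i + n + 1)" for i n using \<epsilon> by simp
  have Eterm: "measure P (E n (j + n)) \<le> 2 powr p * real (j + n + 1) powr (-p)"
    if n: "n \<ge> 1" "n \<ge> K0" for n j
  proof -
    define k where "k = j + n"
    have k: "k \<ge> K0" "1 \<le> k" "n \<le> k" using n by (auto simp: k_def)
    have "measure P {\<omega> \<in> space P. (\<Sum>i<k. (\<lambda>i y. clamp n i (g y)) i (X i \<omega>)) \<le> 0}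
        \<le> exp (- (a * ln k / \<beta>) * \<delta> / 2)"
    proof (rule chernoff_step[OF probP meas_X law_X indep_X g_meas g_int U(1) \<delta> U(2) sig(1,2) sig_int a \<beta> k(2)])
      show "(a * ln k / (\<beta> * k)) * k powr a * (\<beta> * k + U) powr (2 - \<sigma>) * (\<integral>y. \<bar>g y\<bar> powr \<sigma> \<partial>Q) \<le> \<delta>"
        using cond[OF k(1,2)] by (simp add: C_def)
      show "(\<lambda>y. clamp n i (g y)) \<in> borel_measurable Q" for i unfolding clamp_def by measurable
      show "clamp n i (g y) \<ge> - (\<epsilon> * real (i + n + 1))" for i y
        unfolding clamp_def by (rule clamp_facts(1)[OF en U(1)])
      show "min (g y) U \<le> clamp n i (g y)" for i y
        unfolding clamp_def by (rule clamp_facts(2)[OF en U(1)])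
      show "- (\<beta> * k) \<le> clamp n i (g y)" if "i < k" for i y
      proof -
        have "\<epsilon> * real (i + n + 1) \<le> \<epsilon> * (2 * real k)" using that k \<epsilon> by (intro mult_left_mono) auto
        hence "\<epsilon> * real (i + n + 1) \<le> \<beta> * k" by (simp add: \<epsilon>_def)
        thus ?thesis using clamp_facts(1)[OF en[of i n] U(1), where y="g y"] unfolding clamp_def by linarith
      qed
      show "\<bar>clamp n i (g y)\<bar> \<le> \<bar>g y\<bar>" for i y
        unfolding clamp_def by (rule clamp_facts(3)[OF en U(1)])
      show "\<bar>clamp n i (g y)\<bar> \<le> \<beta> * k + U" if "i < k" for i y
      proof -
        have "\<epsilon> * real (i + n + 1) \<le> \<epsilon> * (2 * real k)" using that k \<epsilon> by (intro mult_left_mono) auto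
        hence "\<epsilon> * real (i + n + 1) \<le> \<beta> * k" by (simp add: \<epsilon>_def)
        thus ?thesis using clamp_facts(4)[OF en[of i n] U(1), where y="g y"] unfolding clamp_def by linarith
      qed
    qed
    also have "- (a * ln k / \<beta>) * \<delta> / 2 = - p * ln k"
      unfolding \<beta>_def using a \<delta> p by (simp add: field_simps)
    also have "exp (- p * ln k) = real k powr (-p)" using k by (simp add: powr_def)
    also have "real k powr (-p) \<le> 2 powr p * real (j + n + 1) powr (-p)"
    proof -
      have "(2 * real k) powr (-p) \<le> real (j + n + 1) powr (-p)"
        using k p by (intro powr_mono2') (auto simp: k_def)
      hence "2 powr (-p) * real k powr (-p) \<le> real (j + n + 1) powr (-p)" by (simp add: powr_mult)
      hence "2 powr p * (2 powr (-p) * real k powr (-p)) \<le> 2 powr p * real (j + n + 1) powr (-p)"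
        by (intro mult_left_mono) auto
      moreover have "2 powr p * (2 powr (-p) * real k powr (-p)) = real k powr (-p)"
        by (simp add: mult.assoc[symmetric] powr_add[symmetric])
      ultimately show ?thesis by linarith
    qed
    finally show ?thesis by (simp add: E_def k_def)
  qed
  have Ebound: "measure P (\<Union>j. E n (j + n)) \<le> 2 powr p * (real n powr (1 - p) / (p - 1))"
    if n: "n \<ge> 1" "n \<ge> K0" for n
  proof -
    have sm: "summable (\<lambda>j. 2 powr p * real (j + n + 1) powr (-p))"
      using tail_sum_powr(1)[OF p(1) n(1)] by (rule summable_mult)
    have sm2: "summable (\<lambda>j. measure P (E n (j + n)))"
      by (rule summable_comparison_test'[OF sm]) (use Eterm[OF n] in auto)
    have "measure P (\<Union>j. E n (j + n)) \<le> (\<Sum>j. measure P (E n (j + n)))"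
      using Esets sm2 by (intro P.finite_measure_subadditive_countably) auto
    also have "\<dots> \<le> (\<Sum>j. 2 powr p * real (j + n + 1) powr (-p))"
      by (rule suminf_le[OF Eterm[OF n] sm2 sm])
    also have "\<dots> = 2 powr p * (\<Sum>j. real (j + n + 1) powr (-p))"
      using tail_sum_powr(1)[OF p(1) n(1)] by (rule suminf_mult)
    also have "\<dots> \<le> 2 powr p * (real n powr (1 - p) / (p - 1))"
      using tail_sum_powr(2)[OF p(1) n(1)] by (intro mult_left_mono) auto
    finally show ?thesis .
  qed
  have Abound: "measure P (A n) \<le> (R n / \<epsilon> powr s / (s - 1) + 2 powr p / s / real n) * real n powr (1 - s)"
    if n: "n \<ge> 1" "n \<ge> K0" for n
  proof -
    have "measure P (A n) \<le> measure P (T n \<union> (\<Union>j. E n (j + n)))"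
      using incl Tsets Esets unfolding T_def by (intro P.finite_measure_mono) auto
    also have "\<dots> \<le> measure P (T n) + measure P (\<Union>j. E n (j + n))"
      using Tsets Esets unfolding T_def by (intro measure_Un_le) auto
    also have "\<dots> \<le> R n / \<epsilon> powr s * (real n powr (1 - s) / (s - 1)) + 2 powr p * (real n powr (1 - p) / (p - 1))"
      using Tbound[OF n(1)] Ebound[OF n] by linarith
    also have "real n powr (1 - p) = real n powr (1 - s) / real n"
    proof -
      have "real n powr (1 - p) = real n powr ((1 - s) - 1)" by (simp add: p_def)
      also have "\<dots> = real n powr (1 - s) / real n powr 1" by (rule powr_diff)
      finally show ?thesis by simp
    qed
    finally show ?thesis using p(2) by (simp add: field_simps)
  qed
  show ?thesis
  proof (rule landau_o.smallI)
    fix c :: real assume c: "c > 0"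
    have "(\<lambda>n. R n / \<epsilon> powr s / (s - 1) + 2 powr p / s / real n) \<longlonglongrightarrow> 0 / \<epsilon> powr s / (s - 1) + 0"
      by (intro tendsto_intros R0 tendsto_divide_0[OF tendsto_const] filterlim_real_sequentially) (use s \<epsilon> in auto)
    hence "eventually (\<lambda>n. R n / \<epsilon> powr s / (s - 1) + 2 powr p / s / real n < c) sequentially"
      using c by (intro order_tendstoD) auto
    moreover have "eventually (\<lambda>n. n \<ge> max 1 K0) sequentially" by (rule eventually_ge_at_top)
    ultimately show "eventually (\<lambda>n. norm (measure P {\<omega> \<in> space P. \<exists>k\<ge>n. (\<Sum>i<k. g (X i \<omega>)) \<le> 0})
        \<le> c * norm (real n powr (1 - s))) sequentially"
    proof eventually_elim
      case (elim n)
      have "measure P (A n) \<le> (R n / \<epsilon> powr s / (s - 1) + 2 powr p / s / real n) * real n powr (1 - s)"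
        using elim by (intro Abound) auto
      also have "\<dots> \<le> c * real n powr (1 - s)"
        using elim by (intro mult_right_mono) auto
      finally show ?case by (simp add: A_def)
    qed
  qed
qed


end

lemma convex_diff_bound:
  fixes f :: "real \<Rightarrow> real"
  assumes cv: "convex_on UNIV f"
  shows "\<bar>f t - f t0\<bar> \<le> \<bar>t - t0\<bar> * (\<bar>rderiv f t0\<bar> + \<bar>rderiv f t\<bar>)"
proof (cases t t0 rule: linorder_cases)
  case less
  define d where "d = t0 - t"
  have d: "d > 0" using less by (simp add: d_def)
  have 1: "(f t0 - f (t0 - d)) / d \<le> rderiv f t0" by (rule rderiv_convex(1)[OF cv d])
  have 2: "rderiv f t \<le> (f (t + d) - f t) / d" by (rule rderiv_convex(2)[OF cv d])
  have "t0 - d = t" "t + d = t0" by (auto simp: d_def)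
  hence "f t0 - f t \<le> d * rderiv f t0" "d * rderiv f t \<le> f t0 - f t"
    using 1 2 d by (auto simp: field_simps)
  moreover have "d * rderiv f t0 \<le> d * \<bar>rderiv f t0\<bar>" using d by (intro mult_left_mono) auto
  moreover have "d * (- \<bar>rderiv f t\<bar>) \<le> d * rderiv f t" using d by (intro mult_left_mono) auto
  moreover have "0 \<le> d * \<bar>rderiv f t\<bar>" "0 \<le> d * \<bar>rderiv f t0\<bar>" using d by auto
  moreover have "\<bar>t - t0\<bar> = d" using less by (simp add: d_def)
  ultimately show ?thesis unfolding abs_le_iff distrib_left by (intro conjI; simp; linarith)
next
  case equal thus ?thesis by simp
next
  case greater
  define d where "d = t - t0"
  have d: "d > 0" using greater by (simp add: d_def)
  have 1: "rderiv f t0 \<le> (f (t0 + d) - f t0) / d" by (rule rderiv_convex(2)[OF cv d])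
  have 2: "(f t - f (t - d)) / d \<le> rderiv f t" by (rule rderiv_convex(1)[OF cv d])
  have "t0 + d = t" "t - d = t0" by (auto simp: d_def)
  hence "d * rderiv f t0 \<le> f t - f t0" "f t - f t0 \<le> d * rderiv f t"
    using 1 2 d by (auto simp: field_simps)
  moreover have "d * rderiv f t \<le> d * \<bar>rderiv f t\<bar>" using d by (intro mult_left_mono) auto
  moreover have "d * (- \<bar>rderiv f t0\<bar>) \<le> d * rderiv f t0" using d by (intro mult_left_mono) auto
  moreover have "0 \<le> d * \<bar>rderiv f t\<bar>" "0 \<le> d * \<bar>rderiv f t0\<bar>" using d by auto
  moreover have "\<bar>t - t0\<bar> = d" using greater by (simp add: d_def)
  ultimately show ?thesis unfolding abs_le_iff distrib_left by (intro conjI; simp; linarith)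
qed

theorem proposition1:
  fixes Q :: "'s measure" and P :: "'w measure"
    and h :: "'s \<Rightarrow> real \<Rightarrow> real" and t0 :: real
    and X :: "nat \<Rightarrow> 'w \<Rightarrow> 's" and mhat :: "nat \<Rightarrow> 'w \<Rightarrow> real"
    and m s x0 :: real
  assumes probQ: "prob_space Q"
    and meas_h: "\<And>t. (\<lambda>x. h x t) \<in> borel_measurable Q"
    and conv_h: "\<And>x. x \<in> space Q \<Longrightarrow> convex_on UNIV (h x)"
    and int_Dp: "\<And>t. integrable Q (\<lambda>x. rderiv (h x) t)"
    and int_Dm: "\<And>t. integrable Q (\<lambda>x. lderiv (h x) t)"
    and probP: "prob_space P"
    and meas_X: "\<And>i. X i \<in> measurable P Q"
    and law_X: "\<And>i. distr P Q (X i) = Q"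
    and indep_X: "prob_space.indep_vars P (\<lambda>_. Q) X UNIV"
    and mhat_meas: "\<And>n. mhat n \<in> borel_measurable P"
    and mhat_min: "\<And>n \<omega> t. n \<ge> 1 \<Longrightarrow> \<omega> \<in> space P \<Longrightarrow>
                      empM X h t0 n \<omega> (mhat n \<omega>) \<le> empM X h t0 n \<omega> t"
    and mhat_smallest: "\<And>n \<omega> t. n \<ge> 1 \<Longrightarrow> \<omega> \<in> space P \<Longrightarrow>
                      (\<forall>u. empM X h t0 n \<omega> t \<le> empM X h t0 n \<omega> u) \<Longrightarrow> mhat n \<omega> \<le> t"
    and m_min: "\<And>t. popM Q h t0 m \<le> popM Q h t0 t"
    and m_unique: "\<And>t. (\<forall>u. popM Q h t0 t \<le> popM Q h t0 u) \<Longrightarrow> t = m"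
    and s_gt1: "s > 1"
    and x0_pos: "x0 > 0"
    and moment: "\<And>y. y \<in> {-x0..x0} \<Longrightarrow>
                   (\<integral>\<^sup>+ \<omega>. ennreal (\<bar>rderiv (h (X 0 \<omega>)) (m + y)\<bar> powr s) \<partial>P) < \<infinity>"
  shows "\<forall>x>0. (\<lambda>n. measure P {\<omega> \<in> space P. \<exists>k\<ge>n. \<bar>mhat k \<omega> - m\<bar> > x})
                 \<in> o(\<lambda>n. real n powr (1 - s))"
proof (intro allI impI)
  fix x :: real assume x: "x > 0"
  interpret P: prob_space P by (rule probP)
  interpret Qp: prob_space Q by (rule probQ)
  note meas_X[measurable]
  define x' where "x' = min x x0"
  have x': "0 < x'" "x' \<le> x" "x' \<in> {-x0..x0}" "- x' \<in> {-x0..x0}"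
    using x x0_pos by (auto simp: x'_def)
  define rd where "rd t y = rderiv (h y) t" for t y
  have rd_int: "integrable Q (rd t)" for t using int_Dp[of t] by (simp add: rd_def[abs_def])
  have rd_meas[measurable]: "rd t \<in> borel_measurable Q" for t using rd_int by auto
  define H where "H t y = h y t - h y t0" for t y
  have H_meas: "H t \<in> borel_measurable Q" for t unfolding H_def using meas_h by measurable
  have H_int: "integrable Q (H t)" for t
  proof (rule Bochner_Integration.integrable_bound[OF _ H_meas])
    show "integrable Q (\<lambda>y. \<bar>t - t0\<bar> * (\<bar>rd t0 y\<bar> + \<bar>rd t y\<bar>))"
      using rd_int by (intro integrable_mult_right Bochner_Integration.integrable_add integrable_abs)
    show "AE y in Q. norm (H t y) \<le> norm (\<bar>t - t0\<bar> * (\<bar>rd t0 y\<bar> + \<bar>rd t y\<bar>))"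
      by (rule AE_I2) (use convex_diff_bound[OF conv_h] in \<open>auto simp: H_def rd_def\<close>)
  qed
  have popM_eq: "popM Q h t0 t = (\<integral>y. H t y \<partial>Q)" for t by (simp add: popM_def H_def)
  have mom': "integrable Q (\<lambda>y. \<bar>rd (m + y') y\<bar> powr s)" if y': "y' \<in> {-x0..x0}" for y'
  proof (rule integrableI_bounded)
    show "(\<lambda>y. \<bar>rd (m + y') y\<bar> powr s) \<in> borel_measurable Q" by measurable
    have "(\<integral>\<^sup>+y. ennreal (norm (\<bar>rd (m + y') y\<bar> powr s)) \<partial>Q)
        = (\<integral>\<^sup>+y. ennreal (\<bar>rd (m + y') y\<bar> powr s) \<partial>distr P Q (X 0))"
      using law_X[of 0] by simp
    also have "\<dots> = (\<integral>\<^sup>+\<omega>. ennreal (\<bar>rd (m + y') (X 0 \<omega>)\<bar> powr s) \<partial>P)"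
      by (rule nn_integral_distr) auto
    also have "\<dots> < \<infinity>" using moment[OF y'] by (simp add: rd_def)
    finally show "(\<integral>\<^sup>+y. ennreal (norm (\<bar>rd (m + y') y\<bar> powr s)) \<partial>Q) < \<infinity>" .
  qed
  have strict: "popM Q h t0 m < popM Q h t0 t" if "t \<noteq> m" for t
  proof (rule ccontr)
    assume "\<not> ?thesis"
    hence "popM Q h t0 t = popM Q h t0 m" using m_min[of t] by linarith
    hence "\<forall>u. popM Q h t0 t \<le> popM Q h t0 u" using m_min by simp
    thus False using m_unique that by blast
  qed
  have Epos: "0 < (\<integral>y. rd (m + x') y \<partial>Q)"
  proof -
    have pt: "(H (m + x') y - H m y) / x' \<le> rd (m + x') y" if "y \<in> space Q" for y
      using rderiv_convex(1)[OF conv_h[OF that] x'(1), of "m + x'"] by (simp add: H_def rd_def)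
    have "(\<integral>y. (H (m + x') y - H m y) / x' \<partial>Q) \<le> (\<integral>y. rd (m + x') y \<partial>Q)"
      by (rule integral_mono[OF _ rd_int pt]) (use H_int in auto)
    moreover have "(\<integral>y. (H (m + x') y - H m y) / x' \<partial>Q) = (popM Q h t0 (m + x') - popM Q h t0 m) / x'"
      using H_int by (simp add: popM_eq)
    moreover have "0 < (popM Q h t0 (m + x') - popM Q h t0 m) / x'"
      using strict[of "m + x'"] x'(1) by simp
    ultimately show ?thesis by linarith
  qed
  have Eneg: "(\<integral>y. rd (m - x') y \<partial>Q) < 0"
  proof -
    have pt: "rd (m - x') y \<le> (H m y - H (m - x') y) / x'" if "y \<in> space Q" for y
      using rderiv_convex(2)[OF conv_h[OF that] x'(1), of "m - x'"] by (simp add: H_def rd_def)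
    have "(\<integral>y. rd (m - x') y \<partial>Q) \<le> (\<integral>y. (H m y - H (m - x') y) / x' \<partial>Q)"
      by (rule integral_mono[OF rd_int _ pt]) (use H_int in auto)
    moreover have "(\<integral>y. (H m y - H (m - x') y) / x' \<partial>Q) = (popM Q h t0 m - popM Q h t0 (m - x')) / x'"
      using H_int by (simp add: popM_eq)
    moreover have "(popM Q h t0 m - popM Q h t0 (m - x')) / x' < 0"
      using strict[of "m - x'"] x'(1) by (simp add: divide_neg_pos)
    ultimately show ?thesis by linarith
  qed
  define B1 where "B1 n = {\<omega> \<in> space P. \<exists>k\<ge>n. (\<Sum>i<k. rd (m + x') (X i \<omega>)) \<le> 0}" for n
  define B2 where "B2 n = {\<omega> \<in> space P. \<exists>k\<ge>n. (\<Sum>i<k. (\<lambda>y. - rd (m - x') y) (X i \<omega>)) \<le> 0}" for n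
  have o1: "(\<lambda>n. measure P (B1 n)) \<in> o(\<lambda>n. real n powr (1 - s))"
    unfolding B1_def
    by (rule main_prob[OF probP meas_X law_X indep_X rd_meas rd_int Epos mom'[OF x'(3)] s_gt1])
  have o2: "(\<lambda>n. measure P (B2 n)) \<in> o(\<lambda>n. real n powr (1 - s))"
    unfolding B2_def
  proof (rule main_prob[OF probP meas_X law_X indep_X])
    show "(\<lambda>y. - rd (m - x') y) \<in> borel_measurable Q" by measurable
    show "integrable Q (\<lambda>y. - rd (m - x') y)" using rd_int by auto
    show "0 < (\<integral>y. - rd (m - x') y \<partial>Q)" using Eneg by simp
    show "integrable Q (\<lambda>y. \<bar>- rd (m - x') y\<bar> powr s)" using mom'[OF x'(4)] by simp
  qed (rule s_gt1)
  have B1s: "B1 n \<in> sets P" for n unfolding B1_def by measurable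
  have B2s: "B2 n \<in> sets P" for n unfolding B2_def by measurable
  have incl: "{\<omega> \<in> space P. \<exists>k\<ge>n. \<bar>mhat k \<omega> - m\<bar> > x} \<subseteq> B1 n \<union> B2 n" if n: "n \<ge> 1" for n
  proof
    fix \<omega> assume "\<omega> \<in> {\<omega> \<in> space P. \<exists>k\<ge>n. \<bar>mhat k \<omega> - m\<bar> > x}"
    then obtain k where \<omega>: "\<omega> \<in> space P" and k: "k \<ge> n" "\<bar>mhat k \<omega> - m\<bar> > x" by auto
    have k1: "k \<ge> 1" using k n by simp
    define F where "F u = empM X h t0 k \<omega> u" for u
    define mh where "mh = mhat k \<omega>"
    have Xs: "X i \<omega> \<in> space Q" for i using measurable_space[OF meas_X \<omega>] .
    have Fk: "(\<Sum>i<k. h (X i \<omega>) u - h (X i \<omega>) t0) = real k * F u" for u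
      using k1 by (simp add: F_def empM_def)
    have Fmin: "F mh \<le> F u" for u unfolding F_def mh_def by (rule mhat_min[OF k1 \<omega>])
    have diff: "(\<Sum>i<k. h (X i \<omega>) a - h (X i \<omega>) b) = real k * F a - real k * F b" for a b
    proof -
      have "(\<Sum>i<k. h (X i \<omega>) a - h (X i \<omega>) b)
          = (\<Sum>i<k. (h (X i \<omega>) a - h (X i \<omega>) t0) - (h (X i \<omega>) b - h (X i \<omega>) t0))"
        by (rule sum.cong) auto
      also have "\<dots> = (\<Sum>i<k. h (X i \<omega>) a - h (X i \<omega>) t0) - (\<Sum>i<k. h (X i \<omega>) b - h (X i \<omega>) t0)"
        by (rule sum_subtractf)
      also have "\<dots> = real k * F a - real k * F b" by (simp only: Fk)
      finally show ?thesis .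
    qed
    have "mh > m + x' \<or> mh < m - x'" using k(2) x'(2) by (auto simp: mh_def)
    thus "\<omega> \<in> B1 n \<union> B2 n"
    proof
      assume lt: "mh > m + x'"
      define t where "t = m + x'"
      define d where "d = mh - t"
      have d: "d > 0" using lt by (simp add: d_def t_def)
      have "F mh < F t"
      proof (rule ccontr)
        assume "\<not> F mh < F t"
        hence "\<forall>u. F t \<le> F u" using Fmin by (metis le_less_linear order_trans)
        hence "mh \<le> t" unfolding F_def mh_def by (rule mhat_smallest[OF k1 \<omega>])
        thus False using lt by (simp add: t_def)
      qed
      have "(\<Sum>i<k. rd t (X i \<omega>)) \<le> (\<Sum>i<k. (h (X i \<omega>) mh - h (X i \<omega>) t) / d)"
      proof (rule sum_mono)
        fix i show "rd t (X i \<omega>) \<le> (h (X i \<omega>) mh - h (X i \<omega>) t) / d"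
          using rderiv_convex(2)[OF conv_h[OF Xs[of i]] d, where t=t] by (simp add: rd_def d_def)
      qed
      also have "\<dots> = (\<Sum>i<k. h (X i \<omega>) mh - h (X i \<omega>) t) / d" by (simp add: sum_divide_distrib)
      also have "\<dots> = (real k * F mh - real k * F t) / d" by (simp only: diff)
      also have "\<dots> \<le> 0" using \<open>F mh < F t\<close> d k1 by (intro divide_nonpos_pos) auto
      finally have "\<omega> \<in> B1 n" using \<omega> k unfolding B1_def t_def by auto
      thus ?thesis by blast
    next
      assume lt: "mh < m - x'"
      define t where "t = m - x'"
      define d where "d = t - mh"
      have d: "d > 0" using lt by (simp add: d_def t_def)
      have "0 \<le> (real k * F t - real k * F mh) / d"
        using Fmin[of t] d k1 by (intro divide_nonneg_pos) auto
      also have "\<dots> = (\<Sum>i<k. h (X i \<omega>) t - h (X i \<omega>) mh) / d" by (simp only: diff)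
      also have "\<dots> = (\<Sum>i<k. (h (X i \<omega>) t - h (X i \<omega>) mh) / d)" by (simp add: sum_divide_distrib)
      also have "\<dots> \<le> (\<Sum>i<k. rd t (X i \<omega>))"
      proof (rule sum_mono)
        fix i show "(h (X i \<omega>) t - h (X i \<omega>) mh) / d \<le> rd t (X i \<omega>)"
          using rderiv_convex(1)[OF conv_h[OF Xs[of i]] d, where t=t] by (simp add: rd_def d_def)
      qed
      finally have "(\<Sum>i<k. (\<lambda>y. - rd (m - x') y) (X i \<omega>)) \<le> 0"
        by (simp add: sum_negf t_def)
      hence "\<omega> \<in> B2 n" using \<omega> k unfolding B2_def by auto
      thus ?thesis by blast
    qed
  qed
  show "(\<lambda>n. measure P {\<omega> \<in> space P. \<exists>k\<ge>n. \<bar>mhat k \<omega> - m\<bar> > x}) \<in> o(\<lambda>n. real n powr (1 - s))"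
  proof (rule landau_o.smallI)
    fix c :: real assume c: "c > 0"
    have "eventually (\<lambda>n. norm (measure P (B1 n)) \<le> (c/2) * norm (real n powr (1 - s))) sequentially"
      by (rule landau_o.smallD[OF o1]) (use c in simp)
    moreover have "eventually (\<lambda>n. norm (measure P (B2 n)) \<le> (c/2) * norm (real n powr (1 - s))) sequentially"
      by (rule landau_o.smallD[OF o2]) (use c in simp)
    moreover have "eventually (\<lambda>n. n \<ge> 1) sequentially" by (rule eventually_ge_at_top)
    ultimately show "eventually (\<lambda>n. norm (measure P {\<omega> \<in> space P. \<exists>k\<ge>n. \<bar>mhat k \<omega> - m\<bar> > x})
        \<le> c * norm (real n powr (1 - s))) sequentially"
    proof eventually_elim
      case (elim n)
      have "measure P {\<omega> \<in> space P. \<exists>k\<ge>n. \<bar>mhat k \<omega> - m\<bar> > x} \<le> measure P (B1 n \<union> B2 n)"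
        using incl[OF elim(3)] B1s B2s by (intro P.finite_measure_mono) auto
      also have "\<dots> \<le> measure P (B1 n) + measure P (B2 n)"
        using B1s B2s by (rule measure_Un_le)
      also have "\<dots> \<le> c * norm (real n powr (1 - s))" using elim(1,2) by simp
      finally show ?case by simp
    qed
  qed
qed

end
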